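(* Let $\alpha\in(0,1]$ and run the policy $\mathcal P$ below with $(\epsilon,\delta,\gamma)=(\alpha/3,\alpha/6,\alpha/12)$, where $\bar E\ge p_{\min}(1+\alpha/3)$. Assume: (i) for every $n,t$ the function $p\mapsto z_{n,t}(p)$ is nonincreasing on $[p_{\min},\infty)$; (ii) $z_{n,t}(p)=0$ for all $p\ge\bar E$; (iii) the supremum $V^\star=\sup_{p\ge p_{\min}}R(p)$ is attained at some $p_{\rm opt}\ge p_{\min}(1+\alpha/3)$; (iv) $V^\star\ge\frac8\alpha\,\Phi(\alpha/3,\alpha/6,\alpha/12)$. Then $\mathbb E\big[V_{\rm ESP}(\mathcal P)\big]\ge\frac{V^\star}{1+\alpha}$.
   Context: Fix integers $N,T\ge1$ and reals $\bar c>0$, $p_{\min}>0$, $\epsilon>0$, $\bar E\ge p_{\min}(1+\epsilon)$. For each $n\in\{1,\dots,N\}$ and $t\in\{1,\dots,T\}$ fix $c_{n,t}\in[0,\bar c]$ and a response function $z_{n,t}:[p_{\min},\infty)\to[0,1]$, fixed in advance (not depending on the policy's random choices). Let $R(p)=\sum_{n=1}^N\sum_{t=1}^Tp\,c_{n,t}\,z_{n,t}(p)$. Let $K=\lfloor\log_{1+\epsilon}(\bar E/p_{\min})\rfloor$, $\mathcal K=\{1,\dots,K\}$, $p(k)=p_{\min}(1+\epsilon)^k$, $V_{t,n}(k)=p(k)\,c_{n,t}\,z_{n,t}(p(k))$, and $\mathcal S=\sum_{i=1}^K(1+\epsilon)^i$. Policy $\mathcal P$ with parameters $\gamma\in(0,1)$,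 $\delta>0$: set $\omega_1(k)=1$ for all $k$. For $t=1,\dots,T$: let $h_t(k)=(1-\gamma)\frac{\omega_t(k)}{\sum_{j=1}^K\omega_t(j)}+\gamma\frac{(1+\epsilon)^k}{\mathcal S}$; for each $n$ independently draw $\kappa_{t,n}\in\mathcal K$ with $\Pr[\kappa_{t,n}=k]=h_t(k)$, offer price $p(\kappa_{t,n})$ and receive $V_{t,n}(\kappa_{t,n})$; write $\kappa_t=(\kappa_{t,n})_n$; for each $k$ let $V_t(k,\kappa_t)=\sum_{n=1}^NV_{t,n}(\kappa_{t,n})\mathbf 1\{\kappa_{t,n}=k\}$, $\hat V_t(k,\kappa_t)=\frac{V_t(k,\kappa_t)}{N\bar c\,p_{\min}}\cdot\frac{\gamma}{h_t(k)\,\mathcal S}$, and $\omega_{t+1}(k)=\omega_t(k)(1+\delta)^{\hat V_t(k,\kappa_t)}$. The policy's total revenue is $V_{\rm ESP}(\mathcal P)=\sum_{n=1}^N\sum_{t=1}^TV_{t,n}(\kappa_{t,n})$. Define $\Phi(\epsilon,\delta,\gamma)=\frac{1-\gamma}{\gamma}\cdot\frac{1+\epsilon}{\epsilon}\cdot\frac{N\bar E\bar c}{\delta}\cdot\ln\!\Big(\frac{\ln(\bar E/p_{\min})}{\ln(1+\epsilon)}\Big)$. *)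

theory Defs
  imports Complex_Main "HOL-Library.FuncSet"
begin

text \<open>Conventions: c n t = c_{n,t}; z n t p = z_{n,t}(p); all indices n \<in> {1..N}, t \<in> {1..T},
  price levels k \<in> {1..K}.  A weight vector is a function nat \<Rightarrow> real (only values on {1..K} matter).
  An action profile kappa of round t is a function in PiE {1..N} (\<lambda>_. {1..K}).\<close>

definition revenue :: "nat \<Rightarrow> nat \<Rightarrow> (nat \<Rightarrow> nat \<Rightarrow> real) \<Rightarrow> (nat \<Rightarrow> nat \<Rightarrow> real \<Rightarrow> real) \<Rightarrow> real \<Rightarrow> real" where
  "revenue N T c z p = (\<Sum>n\<in>{1..N}. \<Sum>t\<in>{1..T}. p * c n t * z n t p)"

definition numK :: "real \<Rightarrow> real \<Rightarrow> real \<Rightarrow> nat" where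
  "numK pmin eps Ebar = nat \<lfloor>log (1 + eps) (Ebar / pmin)\<rfloor>"

definition price :: "real \<Rightarrow> real \<Rightarrow> nat \<Rightarrow> real" where
  "price pmin eps k = pmin * (1 + eps) ^ k"

definition Vtn :: "(nat \<Rightarrow> nat \<Rightarrow> real) \<Rightarrow> (nat \<Rightarrow> nat \<Rightarrow> real \<Rightarrow> real) \<Rightarrow> real \<Rightarrow> real \<Rightarrow> nat \<Rightarrow> nat \<Rightarrow> nat \<Rightarrow> real" where
  "Vtn c z pmin eps t n k = price pmin eps k * c n t * z n t (price pmin eps k)"

definition Ssum :: "real \<Rightarrow> nat \<Rightarrow> real" where
  "Ssum eps K = (\<Sum>i\<in>{1..K}. (1 + eps) ^ i)"

definition hdist :: "real \<Rightarrow> real \<Rightarrow> nat \<Rightarrow> (nat \<Rightarrow> real) \<Rightarrow> nat \<Rightarrow> real" where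
  "hdist gamma eps K w k =
     (1 - gamma) * w k / (\<Sum>j\<in>{1..K}. w j) + gamma * (1 + eps) ^ k / Ssum eps K"

definition Vround :: "nat \<Rightarrow> (nat \<Rightarrow> nat \<Rightarrow> real) \<Rightarrow> (nat \<Rightarrow> nat \<Rightarrow> real \<Rightarrow> real) \<Rightarrow> real \<Rightarrow> real
    \<Rightarrow> nat \<Rightarrow> (nat \<Rightarrow> nat) \<Rightarrow> nat \<Rightarrow> real" where
  "Vround N c z pmin eps t kappa k =
     (\<Sum>n\<in>{1..N}. Vtn c z pmin eps t n (kappa n) * (if kappa n = k then 1 else 0))"

definition wupd :: "nat \<Rightarrow> real \<Rightarrow> (nat \<Rightarrow> nat \<Rightarrow> real) \<Rightarrow> (nat \<Rightarrow> nat \<Rightarrow> real \<Rightarrow> real) \<Rightarrow> real \<Rightarrow> real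
    \<Rightarrow> real \<Rightarrow> real \<Rightarrow> real \<Rightarrow> nat \<Rightarrow> nat \<Rightarrow> (nat \<Rightarrow> real) \<Rightarrow> (nat \<Rightarrow> nat) \<Rightarrow> nat \<Rightarrow> real" where
  "wupd N cbar c z pmin eps gamma delta Ebar K t w kappa k =
     w k * (1 + delta) powr
       (Vround N c z pmin eps t kappa k / (real N * cbar * pmin)
        * (gamma / (hdist gamma eps K w k * Ssum eps K)))"

text \<open>Expected revenue collected in the r remaining rounds t, t+1, ..., t+r-1, starting from
  weights w at round t.  Each round, the N prices are drawn independently with law h_t,
  so the probability of profile kappa is the product of the h_t(kappa n).\<close>
primrec exp_rev :: "nat \<Rightarrow> real \<Rightarrow> (nat \<Rightarrow> nat \<Rightarrow> real) \<Rightarrow> (nat \<Rightarrow> nat \<Rightarrow> real \<Rightarrow> real) \<Rightarrow> real \<Rightarrow> real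
    \<Rightarrow> real \<Rightarrow> real \<Rightarrow> real \<Rightarrow> nat \<Rightarrow> nat \<Rightarrow> (nat \<Rightarrow> real) \<Rightarrow> real" where
  "exp_rev N cbar c z pmin eps gamma delta Ebar 0 t w = 0"
| "exp_rev N cbar c z pmin eps gamma delta Ebar (Suc r) t w =
     (let K = numK pmin eps Ebar in
      \<Sum>kappa\<in>PiE {1..N} (\<lambda>_. {1..K}).
        (\<Prod>n\<in>{1..N}. hdist gamma eps K w (kappa n)) *
        ((\<Sum>n\<in>{1..N}. Vtn c z pmin eps t n (kappa n)) +
         exp_rev N cbar c z pmin eps gamma delta Ebar r (Suc t)
           (wupd N cbar c z pmin eps gamma delta Ebar K t w kappa)))"

definition expected_VESP :: "nat \<Rightarrow> nat \<Rightarrow> real \<Rightarrow> (nat \<Rightarrow> nat \<Rightarrow> real) \<Rightarrow> (nat \<Rightarrow> nat \<Rightarrow> real \<Rightarrow> real)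
    \<Rightarrow> real \<Rightarrow> real \<Rightarrow> real \<Rightarrow> real \<Rightarrow> real \<Rightarrow> real" where
  "expected_VESP N T cbar c z pmin eps gamma delta Ebar =
     exp_rev N cbar c z pmin eps gamma delta Ebar T 1 (\<lambda>_. 1)"

definition Phi :: "nat \<Rightarrow> real \<Rightarrow> real \<Rightarrow> real \<Rightarrow> real \<Rightarrow> real \<Rightarrow> real \<Rightarrow> real" where
  "Phi N cbar pmin Ebar eps delta gamma =
     (1 - gamma) / gamma * ((1 + eps) / eps) * (real N * Ebar * cbar / delta) *
     ln (ln (Ebar / pmin) / ln (1 + eps))"

end

theory Submission
  imports Defs "HOL-Analysis.Convex"
begin

lemma ln_lower: assumes "(0::real) \<le> x" shows "x - x^2/2 \<le> ln (1 + x)"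
proof -
  have "(\<lambda>x. ln (1+x) - x + x^2/2) 0 \<le> (\<lambda>x. ln (1+x) - x + x^2/2) x"
  proof (rule DERIV_nonneg_imp_nondecreasing[OF assms])
    fix y :: real assume y: "0 \<le> y" "y \<le> x"
    show "\<exists>d. ((\<lambda>x. ln (1+x) - x + x^2/2) has_real_derivative d) (at y) \<and> d \<ge> 0"
    proof (intro exI conjI)
      show "((\<lambda>x. ln (1+x) - x + x^2/2) has_real_derivative (1/(1+y) - 1 + y)) (at y)"
        using y by (auto intro!: derivative_eq_intros)
      have "1/(1+y) - 1 + y = y^2/(1+y)" using y by (simp add: field_simps power2_eq_square)
      then show "1/(1+y) - 1 + y \<ge> 0" using y by simp
    qed
  qed
  then show ?thesis by simp
qed

lemma powr_chord: assumes "(0::real) \<le> d" "0 \<le> x" "x \<le> 1"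
  shows "(1 + d) powr x \<le> 1 + d * x"
proof -
  let ?L = "ln (1 + d)"
  have "exp ((1 - x) *\<^sub>R 0 + x *\<^sub>R ?L) \<le> (1 - x) * exp 0 + x * exp ?L"
    using assms by (intro convex_onD[OF exp_convex]) auto
  moreover have "exp ?L = 1 + d" using assms by simp
  moreover have "(1 + d) powr x = exp (x * ?L)" using assms by (simp add: powr_def)
  ultimately show ?thesis by (simp add: algebra_simps)
qed

locale esp =
  fixes N T :: nat and cbar pmin Ebar eps gamma delta :: real
    and c :: "nat \<Rightarrow> nat \<Rightarrow> real" and z :: "nat \<Rightarrow> nat \<Rightarrow> real \<Rightarrow> real"
  assumes N1: "N \<ge> 1" and cbar_pos: "cbar > 0" and pmin_pos: "pmin > 0" and eps_pos: "eps > 0"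
    and g0: "0 < gamma" and g1: "gamma < 1" and d0: "delta > 0"
    and Kpos: "numK pmin eps Ebar \<ge> 1"
    and cb: "\<And>n t. n \<in> {1..N} \<Longrightarrow> t \<in> {1..T} \<Longrightarrow> 0 \<le> c n t \<and> c n t \<le> cbar"
    and zb: "\<And>n t p. n \<in> {1..N} \<Longrightarrow> t \<in> {1..T} \<Longrightarrow> p \<ge> pmin \<Longrightarrow> 0 \<le> z n t p \<and> z n t p \<le> 1"
begin

definition "K = numK pmin eps Ebar"
definition "S = Ssum eps K"
definition "a = gamma / (real N * cbar * pmin * S)"
definition "g t k = (\<Sum>n\<in>{1..N}. Vtn c z pmin eps t n k)"
definition "h w k = hdist gamma eps K w k"
definition "P w \<kappa> = (\<Prod>n\<in>{1..N}. h w (\<kappa> n))"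
definition "Vh t w \<kappa> k = Vround N c z pmin eps t \<kappa> k / (real N * cbar * pmin) * (gamma / (h w k * S))"
definition "W (w::nat\<Rightarrow>real) = (\<Sum>j\<in>{1..K}. w j)"
definition "pos (w::nat\<Rightarrow>real) = (\<forall>k\<in>{1..K}. w k > 0)"

lemma K1: "K \<ge> 1" using Kpos by (simp add: K_def)

lemma S_pos: "S > 0"
proof -
  have "(\<Sum>i\<in>{1..K}. (1 + eps) ^ i) > 0"
    using K1 eps_pos by (intro sum_pos) auto
  then show ?thesis by (simp add: S_def Ssum_def)
qed

lemma price_ge: "price pmin eps k \<ge> pmin"
  using pmin_pos eps_pos by (simp add: price_def)

lemma Vtn_bounds: assumes "t \<in> {1..T}" "n \<in> {1..N}"
  shows "0 \<le> Vtn c z pmin eps t n k \<and> Vtn c z pmin eps t n k \<le> price pmin eps k * cbar"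
proof -
  have p: "price pmin eps k \<ge> pmin" by (rule price_ge)
  have c: "0 \<le> c n t" "c n t \<le> cbar" using cb assms by auto
  have zz: "0 \<le> z n t (price pmin eps k)" "z n t (price pmin eps k) \<le> 1" using zb[OF assms(2,1) p] by auto
  have pp: "price pmin eps k > 0" using p pmin_pos by linarith
  have "c n t * z n t (price pmin eps k) \<le> cbar * 1"
    using c zz by (intro mult_mono) auto
  then show ?thesis using pp c zz unfolding Vtn_def
    by (auto intro!: mult_nonneg_nonneg simp: mult.assoc)
qed

lemma W_pos: "pos w \<Longrightarrow> W w > 0"
proof -
  assume "pos w"
  then have "\<forall>k\<in>{1..K}. 0 < w k" by (simp add: pos_def)
  moreover have "{1..K} \<noteq> {}" using K1 by auto
  ultimately show ?thesis unfolding W_def by (intro sum_pos) auto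
qed

lemma h_ge_expl: assumes "pos w" "k \<in> {1..K}"
  shows "h w k \<ge> gamma * (1 + eps) ^ k / S"
proof -
  have "(1 - gamma) * w k / (\<Sum>j\<in>{1..K}. w j) \<ge> 0"
  proof -
    have "w k > 0" using assms unfolding pos_def by auto
    then show ?thesis using g1 W_pos[OF assms(1)] unfolding W_def by auto
  qed
  then show ?thesis by (simp add: h_def hdist_def S_def)
qed

lemma h_pos: assumes "pos w" "k \<in> {1..K}" shows "h w k > 0"
proof -
  have "gamma * (1 + eps) ^ k / S > 0" using g0 eps_pos S_pos by auto
  then show ?thesis using h_ge_expl[OF assms] by linarith
qed

lemma h_ge_w: assumes "pos w" "k \<in> {1..K}"
  shows "h w k \<ge> (1 - gamma) * w k / W w"
proof -
  have "gamma * (1 + eps) ^ k / S \<ge> 0" using g0 eps_pos S_pos by auto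
  then show ?thesis by (simp add: h_def hdist_def S_def W_def)
qed

lemma h_sum: assumes "pos w" shows "(\<Sum>k\<in>{1..K}. h w k) = 1"
proof -
  have Wp: "W w > 0" by (rule W_pos[OF assms])
  have "(\<Sum>k\<in>{1..K}. h w k) = (1 - gamma) * (\<Sum>k\<in>{1..K}. w k) / W w + gamma * (\<Sum>k\<in>{1..K}. (1 + eps) ^ k) / S"
    by (simp add: h_def hdist_def sum.distrib sum_divide_distrib[symmetric] sum_distrib_left[symmetric] W_def S_def)
  also have "\<dots> = 1" using Wp S_pos by (simp add: W_def S_def Ssum_def)
  finally show ?thesis .
qed

lemma a_pos: "a > 0" using g0 N1 cbar_pos pmin_pos S_pos by (simp add: a_def)

lemma Vround_eq: "Vround N c z pmin eps t \<kappa> k = (\<Sum>n\<in>{1..N}. if \<kappa> n = k then Vtn c z pmin eps t n k else 0)"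
  unfolding Vround_def by (intro sum.cong) auto

lemma Vround_bounds: assumes "t \<in> {1..T}"
  shows "0 \<le> Vround N c z pmin eps t \<kappa> k \<and> Vround N c z pmin eps t \<kappa> k \<le> real N * (price pmin eps k * cbar)"
proof
  show "0 \<le> Vround N c z pmin eps t \<kappa> k" unfolding Vround_eq
    using Vtn_bounds[OF assms] by (intro sum_nonneg) auto
  have "Vround N c z pmin eps t \<kappa> k \<le> (\<Sum>n\<in>{1..N}. price pmin eps k * cbar)" unfolding Vround_eq
    using Vtn_bounds[OF assms] price_ge pmin_pos cbar_pos
    by (intro sum_mono) (auto intro!: mult_nonneg_nonneg order_trans[OF _ price_ge] simp: less_imp_le)
  then show "Vround N c z pmin eps t \<kappa> k \<le> real N * (price pmin eps k * cbar)" by simp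
qed

lemma Vh_bounds: assumes "pos w" "k \<in> {1..K}" "t \<in> {1..T}"
  shows "0 \<le> Vh t w \<kappa> k \<and> Vh t w \<kappa> k \<le> 1"
proof -
  let ?V = "Vround N c z pmin eps t \<kappa> k"
  have hp: "h w k > 0" by (rule h_pos[OF assms(1,2)])
  have V: "0 \<le> ?V" "?V \<le> real N * (price pmin eps k * cbar)" using Vround_bounds[OF assms(3)] by auto
  have D: "real N * cbar * pmin * (h w k * S) > 0" using N1 cbar_pos pmin_pos hp S_pos by auto
  have eq: "Vh t w \<kappa> k = ?V * gamma / (real N * cbar * pmin * (h w k * S))"
    by (simp add: Vh_def)
  have "?V * gamma \<le> real N * (price pmin eps k * cbar) * gamma"
    using V g0 by (intro mult_right_mono) auto
  also have "\<dots> = real N * cbar * pmin * (gamma * (1 + eps) ^ k)" by (simp add: price_def algebra_simps)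
  also have "\<dots> \<le> real N * cbar * pmin * (h w k * S)"
  proof -
    have "gamma * (1 + eps) ^ k \<le> h w k * S" using h_ge_expl[OF assms(1,2)] S_pos
      by (simp add: divide_le_eq mult.commute)
    then show ?thesis using N1 cbar_pos pmin_pos by (intro mult_left_mono) auto
  qed
  finally have "?V * gamma \<le> real N * cbar * pmin * (h w k * S)" .
  then show ?thesis unfolding eq using D V g0 by (auto simp: divide_le_eq_1)
qed

lemma hVh: assumes "pos w" "k \<in> {1..K}"
  shows "h w k * Vh t w \<kappa> k = a * Vround N c z pmin eps t \<kappa> k"
  using h_pos[OF assms] S_pos by (simp add: Vh_def a_def field_simps)

lemma sum_Vround: assumes "\<kappa> \<in> PiE {1..N} (\<lambda>_. {1..K})"
  shows "(\<Sum>k\<in>{1..K}. Vround N c z pmin eps t \<kappa> k) = (\<Sum>n\<in>{1..N}. Vtn c z pmin eps t n (\<kappa> n))"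
proof -
  have "(\<Sum>k\<in>{1..K}. Vround N c z pmin eps t \<kappa> k) =
     (\<Sum>n\<in>{1..N}. \<Sum>k\<in>{1..K}. if \<kappa> n = k then Vtn c z pmin eps t n k else 0)"
    unfolding Vround_eq by (rule sum.swap)
  also have "\<dots> = (\<Sum>n\<in>{1..N}. Vtn c z pmin eps t n (\<kappa> n))"
  proof (rule sum.cong)
    fix n assume "n \<in> {1..N}"
    then have "\<kappa> n \<in> {1..K}" using assms by (auto simp: PiE_def Pi_def)
    then show "(\<Sum>k\<in>{1..K}. if \<kappa> n = k then Vtn c z pmin eps t n k else 0) = Vtn c z pmin eps t n (\<kappa> n)"
      by (simp add: sum.delta)
  qed simp
  finally show ?thesis .
qed

lemma wupd_eq: "wupd N cbar c z pmin eps gamma delta Ebar K t w \<kappa> k = w k * (1 + delta) powr Vh t w \<kappa> k"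
  by (simp add: wupd_def Vh_def h_def S_def)

lemma round_pos: assumes "pos w"
  shows "pos (wupd N cbar c z pmin eps gamma delta Ebar K t w \<kappa>)"
  using assms d0 unfolding pos_def wupd_eq by auto

lemma round_ln: assumes "pos w" "t \<in> {1..T}" "\<kappa> \<in> PiE {1..N} (\<lambda>_. {1..K})"
  shows "ln (W (wupd N cbar c z pmin eps gamma delta Ebar K t w \<kappa>)) - ln (W w)
           \<le> delta * a / (1 - gamma) * (\<Sum>n\<in>{1..N}. Vtn c z pmin eps t n (\<kappa> n))"
proof -
  let ?w' = "wupd N cbar c z pmin eps gamma delta Ebar K t w \<kappa>"
  let ?G = "\<Sum>n\<in>{1..N}. Vtn c z pmin eps t n (\<kappa> n)"
  have Wp: "W w > 0" by (rule W_pos[OF assms(1)])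
  have Wp': "W ?w' > 0" by (rule W_pos[OF round_pos[OF assms(1)]])
  have wk: "\<And>k. k \<in> {1..K} \<Longrightarrow> w k > 0" using assms(1) by (simp add: pos_def)
  have G0: "?G \<ge> 0" using Vtn_bounds[OF assms(2)] by (intro sum_nonneg) auto
  have "W ?w' \<le> (\<Sum>k\<in>{1..K}. w k * (1 + delta * Vh t w \<kappa> k))"
    unfolding W_def wupd_eq
    using wk Vh_bounds[OF assms(1) _ assms(2)] d0
    by (intro sum_mono mult_left_mono powr_chord) (auto simp: less_imp_le)
  also have "\<dots> = W w + delta * (\<Sum>k\<in>{1..K}. w k * Vh t w \<kappa> k)"
    by (simp add: W_def algebra_simps sum.distrib sum_distrib_left)
  also have "(\<Sum>k\<in>{1..K}. w k * Vh t w \<kappa> k) \<le> (\<Sum>k\<in>{1..K}. W w / (1 - gamma) * (h w k * Vh t w \<kappa> k))"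
  proof (rule sum_mono)
    fix k assume k: "k \<in> {1..K}"
    have "w k \<le> W w / (1 - gamma) * h w k"
      using h_ge_w[OF assms(1) k] Wp g1 by (simp add: field_simps)
    then show "w k * Vh t w \<kappa> k \<le> W w / (1 - gamma) * (h w k * Vh t w \<kappa> k)"
      using Vh_bounds[OF assms(1) k assms(2)] by (metis mult.assoc mult_right_mono)
  qed
  also have "(\<Sum>k\<in>{1..K}. W w / (1 - gamma) * (h w k * Vh t w \<kappa> k)) = W w / (1 - gamma) * (a * ?G)"
  proof -
    have "(\<Sum>k\<in>{1..K}. W w / (1 - gamma) * (h w k * Vh t w \<kappa> k)) =
      (\<Sum>k\<in>{1..K}. W w / (1 - gamma) * a * Vround N c z pmin eps t \<kappa> k)"
      using hVh[OF assms(1)] by (intro sum.cong) auto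
    also have "\<dots> = W w / (1 - gamma) * a * (\<Sum>k\<in>{1..K}. Vround N c z pmin eps t \<kappa> k)"
      by (simp add: sum_distrib_left)
    finally show ?thesis using sum_Vround[OF assms(3)] by simp
  qed
  finally have "W ?w' \<le> W w + delta * (W w / (1 - gamma) * (a * ?G))" using d0 by simp
  also have "\<dots> = W w * (1 + delta * a / (1 - gamma) * ?G)" by (simp add: algebra_simps)
  finally have le: "W ?w' \<le> W w * (1 + delta * a / (1 - gamma) * ?G)" .
  have x0: "delta * a / (1 - gamma) * ?G \<ge> 0" using d0 a_pos g1 G0 by auto
  have "ln (W ?w') \<le> ln (W w * (1 + delta * a / (1 - gamma) * ?G))"
    using le Wp' by (subst ln_le_cancel_iff) auto
  also have "\<dots> = ln (W w) + ln (1 + delta * a / (1 - gamma) * ?G)"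
    using Wp x0 by (simp add: ln_mult)
  also have "ln (1 + delta * a / (1 - gamma) * ?G) \<le> delta * a / (1 - gamma) * ?G"
    using x0 by (rule ln_add_one_self_le_self)
  finally show ?thesis by simp
qed

lemma P_sum: assumes "pos w" shows "(\<Sum>\<kappa>\<in>PiE {1..N} (\<lambda>_. {1..K}). P w \<kappa>) = 1"
proof -
  have "(\<Prod>n\<in>{1..N}. \<Sum>k\<in>{1..K}. h w k) = (\<Sum>\<kappa>\<in>PiE {1..N} (\<lambda>_. {1..K}). \<Prod>n\<in>{1..N}. h w (\<kappa> n))"
    by (rule prod_sum_PiE) auto
  then show ?thesis using h_sum[OF assms] by (simp add: P_def)
qed

lemma P_nonneg: assumes "pos w" "\<kappa> \<in> PiE {1..N} (\<lambda>_. {1..K})" shows "P w \<kappa> \<ge> 0"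
  unfolding P_def using assms h_pos by (intro prod_nonneg) (auto simp: PiE_def Pi_def less_imp_le)

lemma marginal: assumes "pos w" "n0 \<in> {1..N}"
  shows "(\<Sum>\<kappa>\<in>PiE {1..N} (\<lambda>_. {1..K}). P w \<kappa> * f (\<kappa> n0)) = (\<Sum>k\<in>{1..K}. h w k * f k)"
proof -
  have "(\<Prod>n\<in>{1..N}. \<Sum>k\<in>{1..K}. h w k * (if n = n0 then f k else 1)) =
     (\<Sum>\<kappa>\<in>PiE {1..N} (\<lambda>_. {1..K}). \<Prod>n\<in>{1..N}. h w (\<kappa> n) * (if n = n0 then f (\<kappa> n) else 1))"
    by (rule prod_sum_PiE[where f = "\<lambda>n k. h w k * (if n = n0 then f k else 1)"]) auto
  also have "\<dots> = (\<Sum>\<kappa>\<in>PiE {1..N} (\<lambda>_. {1..K}). P w \<kappa> * f (\<kappa> n0))"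
  proof (rule sum.cong)
    fix \<kappa> show "(\<Prod>n\<in>{1..N}. h w (\<kappa> n) * (if n = n0 then f (\<kappa> n) else 1)) = P w \<kappa> * f (\<kappa> n0)"
      unfolding P_def prod.distrib using assms(2) by (simp add: prod.delta)
  qed simp
  finally have 1: "(\<Prod>n\<in>{1..N}. \<Sum>k\<in>{1..K}. h w k * (if n = n0 then f k else 1)) =
     (\<Sum>\<kappa>\<in>PiE {1..N} (\<lambda>_. {1..K}). P w \<kappa> * f (\<kappa> n0))" .
  have "(\<Prod>n\<in>{1..N}. \<Sum>k\<in>{1..K}. h w k * (if n = n0 then f k else 1)) =
        (\<Prod>n\<in>{1..N}. if n = n0 then (\<Sum>k\<in>{1..K}. h w k * f k) else 1)"
    using h_sum[OF assms(1)] by (intro prod.cong) auto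
  also have "\<dots> = (\<Sum>k\<in>{1..K}. h w k * f k)" using assms(2) by (simp add: prod.delta)
  finally show ?thesis using 1 by simp
qed

lemma E_Vh: assumes "pos w" "k \<in> {1..K}"
  shows "(\<Sum>\<kappa>\<in>PiE {1..N} (\<lambda>_. {1..K}). P w \<kappa> * Vh t w \<kappa> k) = a * g t k"
proof -
  define D where "D = 1 / (real N * cbar * pmin) * (gamma / (h w k * S))"
  have Vh_eq: "\<And>\<kappa>. Vh t w \<kappa> k = D * (\<Sum>n\<in>{1..N}. if \<kappa> n = k then Vtn c z pmin eps t n k else 0)"
    by (simp add: Vh_def Vround_eq D_def)
  have "(\<Sum>\<kappa>\<in>PiE {1..N} (\<lambda>_. {1..K}). P w \<kappa> * Vh t w \<kappa> k) =
     D * (\<Sum>n\<in>{1..N}. \<Sum>\<kappa>\<in>PiE {1..N} (\<lambda>_. {1..K}). P w \<kappa> * (if \<kappa> n = k then Vtn c z pmin eps t n k else 0))"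
    unfolding Vh_eq by (simp add: sum_distrib_left algebra_simps) (rule sum.swap)
  also have "\<dots> = D * (\<Sum>n\<in>{1..N}. h w k * Vtn c z pmin eps t n k)"
  proof -
    have "\<And>n. n \<in> {1..N} \<Longrightarrow> (\<Sum>\<kappa>\<in>PiE {1..N} (\<lambda>_. {1..K}). P w \<kappa> * (if \<kappa> n = k then Vtn c z pmin eps t n k else 0))
        = h w k * Vtn c z pmin eps t n k"
    proof -
      fix n assume n: "n \<in> {1..N}"
      have "(\<Sum>\<kappa>\<in>PiE {1..N} (\<lambda>_. {1..K}). P w \<kappa> * (if \<kappa> n = k then Vtn c z pmin eps t n k else 0))
          = (\<Sum>j\<in>{1..K}. h w j * (if j = k then Vtn c z pmin eps t n k else 0))"
        by (rule marginal[OF assms(1) n, where f = "\<lambda>j. if j = k then Vtn c z pmin eps t n k else 0"])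
      also have "\<dots> = h w k * Vtn c z pmin eps t n k" using assms(2)
        by (simp add: if_distrib[of "\<lambda>x. h w _ * x"] sum.delta' cong: if_cong)
      finally show "?thesis n" .
    qed
    then show ?thesis by (intro arg_cong[where f = "\<lambda>x. D * x"] sum.cong) auto
  qed
  also have "\<dots> = a * g t k"
    using h_pos[OF assms] S_pos N1 cbar_pos pmin_pos
    by (simp add: D_def a_def g_def sum_distrib_left[symmetric] field_simps)
  finally show ?thesis .
qed

lemma exp_rev_Suc: "exp_rev N cbar c z pmin eps gamma delta Ebar (Suc r) t w =
  (\<Sum>\<kappa>\<in>PiE {1..N} (\<lambda>_. {1..K}). P w \<kappa> * ((\<Sum>n\<in>{1..N}. Vtn c z pmin eps t n (\<kappa> n)) +
      exp_rev N cbar c z pmin eps gamma delta Ebar r (Suc t) (wupd N cbar c z pmin eps gamma delta Ebar K t w \<kappa>)))"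
  by (simp add: Let_def K_def[symmetric] P_def h_def)

lemma induct_bound: assumes ks: "kstar \<in> {1..K}"
  shows "\<forall>w t. pos w \<longrightarrow> 1 \<le> t \<longrightarrow> t + r \<le> Suc T \<longrightarrow>
   (1 - gamma) / (delta * a) * (ln (1 + delta) * a * (\<Sum>s\<in>{t..<t+r}. g s kstar) + ln (w kstar) - ln (W w))
     \<le> exp_rev N cbar c z pmin eps gamma delta Ebar r t w"
proof (induction r)
  case 0
  show ?case
  proof (intro allI impI)
    fix w :: "nat \<Rightarrow> real" and t :: nat assume pw: "pos w"
    have wk: "w kstar > 0" using pw ks by (simp add: pos_def)
    have "w kstar \<le> W w" unfolding W_def using pw ks
      by (intro member_le_sum) (auto simp: pos_def less_imp_le)
    then have "ln (w kstar) - ln (W w) \<le> 0" using wk by simp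
    moreover have "(1 - gamma) / (delta * a) \<ge> 0" using g1 d0 a_pos by auto
    ultimately have "(1 - gamma) / (delta * a) * (ln (w kstar) - ln (W w)) \<le> 0"
      by (intro mult_nonneg_nonpos) auto
    then show "(1 - gamma) / (delta * a) * (ln (1 + delta) * a * (\<Sum>s\<in>{t..<t+0}. g s kstar) + ln (w kstar) - ln (W w))
     \<le> exp_rev N cbar c z pmin eps gamma delta Ebar 0 t w"
      by (simp add: mult_nonneg_nonpos)
  qed
next
  case (Suc r)
  show ?case
  proof (intro allI impI)
    fix w :: "nat \<Rightarrow> real" and t :: nat assume pw: "pos w" and t1: "1 \<le> t" and tr: "t + Suc r \<le> Suc T"
    have tT: "t \<in> {1..T}" using t1 tr by auto
    define C where "C = (1 - gamma) / (delta * a)"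
    define L where "L = ln (1 + delta)"
    define X where "X = C * (L * a * (\<Sum>s\<in>{Suc t..<Suc t+r}. g s kstar) + ln (w kstar) - ln (W w))"
    define Y where "Y = C * L"
    have C0: "C > 0" using g1 d0 a_pos by (simp add: C_def)
    have trm: "P w \<kappa> * (X + Y * Vh t w \<kappa> kstar) \<le> P w \<kappa> * ((\<Sum>n\<in>{1..N}. Vtn c z pmin eps t n (\<kappa> n)) +
      exp_rev N cbar c z pmin eps gamma delta Ebar r (Suc t) (wupd N cbar c z pmin eps gamma delta Ebar K t w \<kappa>))"
      if \<kappa>: "\<kappa> \<in> PiE {1..N} (\<lambda>_. {1..K})" for \<kappa>
    proof (rule mult_left_mono[OF _ P_nonneg[OF pw \<kappa>]])
      let ?w' = "wupd N cbar c z pmin eps gamma delta Ebar K t w \<kappa>"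
      let ?G = "\<Sum>n\<in>{1..N}. Vtn c z pmin eps t n (\<kappa> n)"
      have pw': "pos ?w'" by (rule round_pos[OF pw])
      have IH: "C * (L * a * (\<Sum>s\<in>{Suc t..<Suc t+r}. g s kstar) + ln (?w' kstar) - ln (W ?w'))
          \<le> exp_rev N cbar c z pmin eps gamma delta Ebar r (Suc t) ?w'"
        unfolding C_def L_def by (rule Suc.IH[rule_format]) (use pw' tr in auto)
      have rl: "ln (W ?w') - ln (W w) \<le> delta * a / (1 - gamma) * ?G" by (rule round_ln[OF pw tT \<kappa>])
      have "C * (ln (W ?w') - ln (W w)) \<le> C * (delta * a / (1 - gamma) * ?G)"
        using rl C0 by (intro mult_left_mono) auto
      also have "\<dots> = ?G" using g1 d0 a_pos by (simp add: C_def field_simps)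
      finally have Gb: "C * (ln (W ?w') - ln (W w)) \<le> ?G" .
      have wk: "w kstar > 0" using pw ks by (simp add: pos_def)
      have lnw': "ln (?w' kstar) = ln (w kstar) + Vh t w \<kappa> kstar * L"
        unfolding wupd_eq L_def using wk d0 by (simp add: ln_mult ln_powr)
      have "X + Y * Vh t w \<kappa> kstar = C * (ln (W ?w') - ln (W w)) +
         C * (L * a * (\<Sum>s\<in>{Suc t..<Suc t+r}. g s kstar) + ln (?w' kstar) - ln (W ?w'))"
        unfolding X_def Y_def lnw' by (simp add: algebra_simps)
      also have "\<dots> \<le> ?G + exp_rev N cbar c z pmin eps gamma delta Ebar r (Suc t) ?w'"
        using Gb IH by linarith
      finally show "X + Y * Vh t w \<kappa> kstar \<le> ?G + exp_rev N cbar c z pmin eps gamma delta Ebar r (Suc t) ?w'" .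
    qed
    have "(\<Sum>\<kappa>\<in>PiE {1..N} (\<lambda>_. {1..K}). P w \<kappa> * (X + Y * Vh t w \<kappa> kstar))
        = X * (\<Sum>\<kappa>\<in>PiE {1..N} (\<lambda>_. {1..K}). P w \<kappa>) + Y * (\<Sum>\<kappa>\<in>PiE {1..N} (\<lambda>_. {1..K}). P w \<kappa> * Vh t w \<kappa> kstar)"
      by (simp add: algebra_simps sum.distrib sum_distrib_left)
    also have "\<dots> = X + Y * (a * g t kstar)" using P_sum[OF pw] E_Vh[OF pw ks] by simp
    also have "\<dots> = C * (L * a * (\<Sum>s\<in>{t..<t + Suc r}. g s kstar) + ln (w kstar) - ln (W w))"
    proof -
      have "(\<Sum>s\<in>{t..<t + Suc r}. g s kstar) = g t kstar + (\<Sum>s\<in>{Suc t..<Suc t+r}. g s kstar)"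
        by (subst sum.atLeast_Suc_lessThan) auto
      then show ?thesis unfolding X_def Y_def by (simp add: algebra_simps)
    qed
    finally have eq: "(\<Sum>\<kappa>\<in>PiE {1..N} (\<lambda>_. {1..K}). P w \<kappa> * (X + Y * Vh t w \<kappa> kstar))
       = C * (L * a * (\<Sum>s\<in>{t..<t + Suc r}. g s kstar) + ln (w kstar) - ln (W w))" .
    have "(\<Sum>\<kappa>\<in>PiE {1..N} (\<lambda>_. {1..K}). P w \<kappa> * (X + Y * Vh t w \<kappa> kstar))
       \<le> exp_rev N cbar c z pmin eps gamma delta Ebar (Suc r) t w"
      unfolding exp_rev_Suc by (rule sum_mono) (rule trm)
    then show "(1 - gamma) / (delta * a) * (ln (1 + delta) * a * (\<Sum>s\<in>{t..<t + Suc r}. g s kstar) + ln (w kstar) - ln (W w))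
       \<le> exp_rev N cbar c z pmin eps gamma delta Ebar (Suc r) t w"
      using eq unfolding C_def L_def by simp
  qed
qed

lemma main_bound: assumes ks: "kstar \<in> {1..K}"
  shows "expected_VESP N T cbar c z pmin eps gamma delta Ebar \<ge>
     (1 - gamma) * ln (1 + delta) / delta * (\<Sum>t\<in>{1..T}. g t kstar)
     - (1 - gamma) * real N * cbar * pmin * S / (delta * gamma) * ln (real K)"
proof -
  have p1: "pos (\<lambda>_. 1)" by (simp add: pos_def)
  have I: "(1 - gamma) / (delta * a) * (ln (1 + delta) * a * (\<Sum>s\<in>{1..<1+T}. g s kstar) + ln ((\<lambda>_. 1::real) kstar) - ln (W (\<lambda>_. 1)))
     \<le> exp_rev N cbar c z pmin eps gamma delta Ebar T 1 (\<lambda>_. 1)"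
    using induct_bound[OF ks, of T] p1 by auto
  have es: "{1..<1+T} = {1..T}" by auto
  have eW: "W (\<lambda>_. 1) = real K" by (simp add: W_def)
  have H: "(1 - gamma) / (delta * a) * (ln (1 + delta) * a * (\<Sum>s\<in>{1..T}. g s kstar) - ln (real K))
     \<le> expected_VESP N T cbar c z pmin eps gamma delta Ebar"
    using I unfolding es eW expected_VESP_def by simp
  have e1: "(1 - gamma) / (delta * a) = (1 - gamma) * real N * cbar * pmin * S / (delta * gamma)"
    using a_pos d0 g0 S_pos N1 cbar_pos pmin_pos by (simp add: a_def field_simps)
  have e2: "(1 - gamma) / (delta * a) * (ln (1 + delta) * a) = (1 - gamma) * ln (1 + delta) / delta"
    using a_pos d0 by (simp add: field_simps)
  have "(1 - gamma) / (delta * a) * (ln (1 + delta) * a * (\<Sum>s\<in>{1..T}. g s kstar) - ln (real K))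
     = (1 - gamma) / (delta * a) * (ln (1 + delta) * a) * (\<Sum>s\<in>{1..T}. g s kstar) - (1 - gamma) / (delta * a) * ln (real K)"
    by (simp add: algebra_simps)
  then have H2: "(1 - gamma) / (delta * a) * (ln (1 + delta) * a) * (\<Sum>s\<in>{1..T}. g s kstar) - (1 - gamma) / (delta * a) * ln (real K)
     \<le> expected_VESP N T cbar c z pmin eps gamma delta Ebar" using H by simp
  note H3 = H2[unfolded e2]
  note H4 = H3[unfolded e1]
  then show ?thesis by simp
qed

end

lemma floor_log_facts:
  fixes q x :: real assumes q: "q > 1" and x: "x \<ge> q"
  shows "nat \<lfloor>log q x\<rfloor> \<ge> 1" "q ^ nat \<lfloor>log q x\<rfloor> \<le> x" "x < q ^ Suc (nat \<lfloor>log q x\<rfloor>)"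
proof -
  have xp: "x > 0" using q x by linarith
  have l1: "log q x \<ge> 1" using q x xp by (subst le_log_iff) auto
  then have fl: "real (nat \<lfloor>log q x\<rfloor>) = of_int \<lfloor>log q x\<rfloor>" by simp
  show "nat \<lfloor>log q x\<rfloor> \<ge> 1" using l1 by linarith
  have "q ^ nat \<lfloor>log q x\<rfloor> = q powr real (nat \<lfloor>log q x\<rfloor>)" using q by (simp add: powr_realpow)
  also have "\<dots> \<le> q powr log q x" using q fl by (intro powr_mono) auto
  also have "\<dots> = x" using q xp by simp
  finally show "q ^ nat \<lfloor>log q x\<rfloor> \<le> x" .
  have "x = q powr log q x" using q xp by simp
  also have "\<dots> < q powr real (Suc (nat \<lfloor>log q x\<rfloor>))" using q fl by (intro powr_less_mono) linarith+
  also have "\<dots> = q ^ Suc (nat \<lfloor>log q x\<rfloor>)" using q by (subst powr_realpow) auto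
  finally show "x < q ^ Suc (nat \<lfloor>log q x\<rfloor>)" .
qed

lemma geom_sum: "(\<Sum>i\<in>{1..K}. (q::real) ^ i) * (q - 1) = q ^ Suc K - q"
  by (induction K) (auto simp: algebra_simps)

lemma final_ineq: fixes x :: real assumes "0 < x" "x \<le> 1"
  shows "1 / (1 + x) \<le> (1 - x/12)^2 / (1 + x/3) - x / 8"
proof -
  have poly: "0 \<le> x * (162 - 141 * x - 15 * x^2)"
  proof -
    have "x^2 \<le> 1" using assms by (simp add: power_le_one)
    then show ?thesis using assms by (intro mult_nonneg_nonneg) auto
  qed
  have "(1 - x/12)^2 / (1 + x/3) - x / 8 - 1 / (1 + x) = x * (162 - 141 * x - 15 * x^2) / (144 * (3 + x) * (1 + x))"
  proof -
    have a: "1 + x/3 = (3 + x) / 3" by simp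
    have b: "3 + x > 0" "1 + x > 0" using assms by auto
    show ?thesis unfolding a using b
      by (simp add: divide_simps power2_eq_square) (simp add: algebra_simps)
  qed
  also have "\<dots> \<ge> 0" using poly assms by (intro divide_nonneg_pos) auto
  finally show ?thesis by simp
qed

theorem corollary1:
  fixes N T :: nat and cbar pmin Ebar alpha popt :: real
    and c :: "nat \<Rightarrow> nat \<Rightarrow> real" and z :: "nat \<Rightarrow> nat \<Rightarrow> real \<Rightarrow> real"
  assumes "N \<ge> 1" and "T \<ge> 1" and "cbar > 0" and "pmin > 0"
    and "0 < alpha" and "alpha \<le> 1"
    and "Ebar \<ge> pmin * (1 + alpha / 3)"
    and "\<And>n t. n \<in> {1..N} \<Longrightarrow> t \<in> {1..T} \<Longrightarrow> 0 \<le> c n t \<and> c n t \<le> cbar"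
    and "\<And>n t p. n \<in> {1..N} \<Longrightarrow> t \<in> {1..T} \<Longrightarrow> p \<ge> pmin \<Longrightarrow> 0 \<le> z n t p \<and> z n t p \<le> 1"
    and "\<And>n t p q. n \<in> {1..N} \<Longrightarrow> t \<in> {1..T} \<Longrightarrow> pmin \<le> p \<Longrightarrow> p \<le> q \<Longrightarrow> z n t q \<le> z n t p"
    and "\<And>n t p. n \<in> {1..N} \<Longrightarrow> t \<in> {1..T} \<Longrightarrow> p \<ge> Ebar \<Longrightarrow> z n t p = 0"
    and "popt \<ge> pmin * (1 + alpha / 3)"
    and "\<And>p. p \<ge> pmin \<Longrightarrow> revenue N T c z p \<le> revenue N T c z popt"
    and "revenue N T c z popt \<ge> 8 / alpha * Phi N cbar pmin Ebar (alpha / 3) (alpha / 6) (alpha / 12)"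
  shows "expected_VESP N T cbar c z pmin (alpha / 3) (alpha / 12) (alpha / 6) Ebar
           \<ge> revenue N T c z popt / (1 + alpha)"
proof -
  note A = assms
  define eps where "eps = alpha / 3"
  define gam where "gam = alpha / 12"
  define del where "del = alpha / 6"
  define q where "q = 1 + eps"
  define Rs where "Rs = revenue N T c z popt"
  have eps0: "eps > 0" and q1: "q > 1" using A(5) by (auto simp: eps_def q_def)
  have Eq: "Ebar / pmin \<ge> q" using A(4,7) by (simp add: q_def eps_def field_simps)
  have Ebar_pos: "Ebar > 0"
  proof -
    have "pmin * (1 + alpha/3) > 0" using A(4,5) by simp
    then show ?thesis using A(7) by linarith
  qed
  note FL = floor_log_facts[OF q1 Eq]
  have Kpos: "numK pmin eps Ebar \<ge> 1" using FL(1) by (simp add: numK_def q_def)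
  interpret E: esp N T cbar pmin Ebar eps gam del c z
    using A Kpos eps0 by unfold_locales (auto simp: gam_def del_def)
  have KK: "E.K = nat \<lfloor>log q (Ebar / pmin)\<rfloor>" by (simp add: E.K_def numK_def q_def)
  have Rg: "revenue N T c z (price pmin eps k) = (\<Sum>t\<in>{1..T}. E.g t k)" for k
    unfolding revenue_def E.g_def Vtn_def by (rule sum.swap)
  have Rnn: "revenue N T c z p \<ge> 0" if "p \<ge> pmin" for p
    unfolding revenue_def using that A(4,8,9)
    by (intro sum_nonneg mult_nonneg_nonneg) auto
  have pp: "pmin \<le> popt"
  proof -
    have "pmin \<le> pmin * (1 + alpha/3)" using A(4,5) by (simp add: algebra_simps)
    then show ?thesis using A(12) by linarith
  qed
  have Rs0: "Rs \<ge> 0" unfolding Rs_def using Rnn pp by simp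
  define X where "X = (1 - gam) * real N * cbar * pmin * E.S / (del * gam) * ln (real E.K)"
  have qK: "q ^ E.K \<le> Ebar / pmin" using FL(2) KK by simp
  have pS: "pmin * E.S \<le> q / eps * Ebar"
  proof -
    have "E.S * eps = q ^ Suc E.K - q" using geom_sum[where K="E.K" and q=q] by (simp add: E.S_def Ssum_def q_def)
    also have "\<dots> \<le> q * (Ebar / pmin)"
    proof -
      have "q * q ^ E.K \<le> q * (Ebar / pmin)" using qK q1 by (intro mult_left_mono) auto
      then show ?thesis using q1 by simp
    qed
    finally have "E.S * eps \<le> q * (Ebar / pmin)" .
    then show ?thesis using eps0 A(4) by (simp add: field_simps)
  qed
  have lnK0: "ln (real E.K) \<ge> 0" using E.K1 by simp
  have lnK: "ln (real E.K) \<le> ln (ln (Ebar / pmin) / ln q)"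
  proof -
    have ly: "log q (Ebar / pmin) \<ge> 1" using q1 Eq A(4) by (subst le_log_iff) auto
    then have "real (nat \<lfloor>log q (Ebar / pmin)\<rfloor>) = of_int \<lfloor>log q (Ebar / pmin)\<rfloor>" by simp
    then have "real E.K \<le> log q (Ebar / pmin)" unfolding KK by linarith
    then show ?thesis using E.K1 by (simp add: log_def)
  qed
  have XPhi: "X \<le> Phi N cbar pmin Ebar eps del gam"
  proof -
    have g: "0 < gam" "gam < 1" "0 < del" using A(5,6) by (auto simp: gam_def del_def)
    have "X = ((1 - gam) / gam) * (real N * cbar / del) * (pmin * E.S) * ln (real E.K)"
      by (simp add: X_def field_simps)
    also have "\<dots> \<le> ((1 - gam) / gam) * (real N * cbar / del) * (q / eps * Ebar) * ln (ln (Ebar / pmin) / ln q)"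
    proof -
      have uv: "(pmin * E.S) * ln (real E.K) \<le> (q / eps * Ebar) * ln (ln (Ebar / pmin) / ln q)"
        by (rule mult_mono[OF pS lnK]) (use lnK0 E.S_pos A(4) Ebar_pos q1 eps0 in auto)
      have c0: "((1 - gam) / gam) * (real N * cbar / del) \<ge> 0" using g A(3) by auto
      show ?thesis using mult_left_mono[OF uv c0] by (simp add: mult.assoc)
    qed
    also have "\<dots> = Phi N cbar pmin Ebar eps del gam" by (simp add: Phi_def q_def field_simps)
    finally show ?thesis .
  qed
  have PhiR: "Phi N cbar pmin Ebar eps del gam \<le> alpha / 8 * Rs"
    using A(14) A(5) unfolding Rs_def eps_def del_def gam_def by (simp add: field_simps)
  define AA where "AA = (1 - gam) * ln (1 + del) / del"
  have AA: "AA \<ge> (1 - alpha / 12)^2"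
  proof -
    have d: "del > 0" using A(5) by (simp add: del_def)
    have "ln (1 + del) / del \<ge> 1 - alpha / 12"
      using ln_lower[of del] d by (simp add: del_def field_simps power2_eq_square)
    moreover have "1 - gam \<ge> 0" "1 - alpha / 12 \<ge> 0" using A(6) by (auto simp: gam_def)
    ultimately have "(1 - gam) * (ln (1 + del) / del) \<ge> (1 - alpha/12) * (1 - alpha/12)"
      by (intro mult_mono) (auto simp: gam_def)
    then show ?thesis by (simp add: AA_def power2_eq_square)
  qed
  have AA0: "AA \<ge> 0" using AA by (metis order_trans zero_le_power2)
  have main: "expected_VESP N T cbar c z pmin eps gam del Ebar \<ge> AA * revenue N T c z (price pmin eps k) - X"
    if "k \<in> {1..E.K}" for k
    using E.main_bound[OF that] unfolding Rg AA_def X_def by simp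
  have goal_eq: "expected_VESP N T cbar c z pmin (alpha / 3) (alpha / 12) (alpha / 6) Ebar
     = expected_VESP N T cbar c z pmin eps gam del Ebar" by (simp add: eps_def gam_def del_def)
  show ?thesis
  proof (cases "popt < Ebar")
    case True
    define k where "k = nat \<lfloor>log q (popt / pmin)\<rfloor>"
    have Pq: "popt / pmin \<ge> q" using A(4,12) by (simp add: q_def eps_def field_simps)
    note FP = floor_log_facts[OF q1 Pq]
    have k1: "k \<ge> 1" using FP(1) by (simp add: k_def)
    have kK: "k \<le> E.K" unfolding k_def KK
      using A(4,5) True Pq q1 by (intro nat_mono floor_mono log_mono) (auto simp: divide_right_mono)
    have pk_le: "price pmin eps k \<le> popt" using FP(2) A(4) by (simp add: price_def k_def q_def field_simps)
    have pk_gt: "popt \<le> q * price pmin eps k" using FP(3) A(4) by (simp add: price_def k_def q_def field_simps)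
    have Rk: "revenue N T c z (price pmin eps k) \<ge> Rs / q"
    proof -
      have "Rs / q = (\<Sum>n\<in>{1..N}. \<Sum>t\<in>{1..T}. (popt / q) * c n t * z n t popt)"
        unfolding Rs_def revenue_def by (simp add: sum_divide_distrib)
      also have "\<dots> \<le> revenue N T c z (price pmin eps k)" unfolding revenue_def
      proof (intro sum_mono)
        fix n t assume n: "n \<in> {1..N}" and t: "t \<in> {1..T}"
        have pge: "price pmin eps k \<ge> pmin" by (rule E.price_ge)
        have c: "0 \<le> c n t" using A(8)[OF n t] by simp
        have z0: "0 \<le> z n t popt" using A(9)[OF n t pp] by simp
        have zm: "z n t popt \<le> z n t (price pmin eps k)" using A(10)[OF n t pge pk_le] .
        have pq: "popt / q \<le> price pmin eps k" using pk_gt q1 by (simp add: divide_le_eq mult.commute)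
        have "popt / q * c n t * z n t popt \<le> price pmin eps k * c n t * z n t popt"
          using pq c z0 by (intro mult_right_mono) auto
        also have "\<dots> \<le> price pmin eps k * c n t * z n t (price pmin eps k)"
          using zm c pge A(4) by (intro mult_left_mono) auto
        finally show "popt / q * c n t * z n t popt \<le> price pmin eps k * c n t * z n t (price pmin eps k)" .
      qed
      finally show ?thesis .
    qed
    have "Rs / (1 + alpha) \<le> ((1 - alpha/12)^2 / (1 + alpha/3) - alpha / 8) * Rs"
      using final_ineq[OF A(5,6)] Rs0 by (metis mult_right_mono times_divide_eq_left mult_1)
    also have "\<dots> = (1 - alpha/12)^2 * (Rs / q) - alpha / 8 * Rs" by (simp add: q_def eps_def algebra_simps)
    also have "\<dots> \<le> AA * (Rs / q) - alpha / 8 * Rs"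
    proof -
      have "Rs / q \<ge> 0" using Rs0 q1 by simp
      from mult_right_mono[OF AA this] show ?thesis by simp
    qed
    also have "\<dots> \<le> AA * revenue N T c z (price pmin eps k) - X"
      using mult_left_mono[OF Rk AA0] XPhi PhiR by linarith
    also have "\<dots> \<le> expected_VESP N T cbar c z pmin eps gam del Ebar" using main k1 kK by auto
    finally show ?thesis unfolding goal_eq Rs_def .
  next
    case False
    have R0: "Rs = 0" unfolding Rs_def revenue_def using A(11) False by auto
    have X0: "X \<le> 0" using XPhi PhiR R0 by simp
    have "0 \<le> AA * revenue N T c z (price pmin eps 1)" using AA0 Rnn[OF E.price_ge] by simp
    also have "\<dots> - X \<le> expected_VESP N T cbar c z pmin eps gam del Ebar" using main[of 1] E.K1 by auto
    finally show ?thesis using X0 unfolding goal_eq Rs_def[symmetric] R0 by simp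
  qed
qed

end
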